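(* Let $\phi_n(x)=((n+1)x^2-3x-n)U_n(x)+(x+1)U_{n-1}(x)+x+1$. Define, for $k\ge1$, \[ Q_{2k}(x)=((2k+1)x^2-3x-2k)(U_k(x)-U_{k-1}(x))+(x+1)(U_{k-1}(x)-U_{k-2}(x)), \] and, for $k\ge0$, \[ Q_{2k+1}(x)=((2k+2)x^2-3x-2k-1)(U_{k+1}(x)-U_{k-1}(x))+(x+1)(U_k(x)-U_{k-2}(x)). \] Then $\phi_n(x)=U^{\mathrm e}_n(x)\,Q_n(x)$ for all $n\ge1$.
   Context: $U_n$ is the Chebyshev polynomial of the second kind, $U_n(\cos\theta)=\sin((n+1)\theta)/\sin\theta$, extended to negative indices via the recurrence $U_{k+1}=2xU_k-U_{k-1}$, i.e. $U_{-1}=0$, $U_{-2}=-1$. $U^{\mathrm e}_n$ is defined by $U^{\mathrm e}_n(\cos\theta)=\frac{\sin((n+1)\theta/2)}{\sin(\theta/2)}$ for $n$ even and $U^{\mathrm e}_n(\cos\theta)=\frac{\sin((n+1)\theta/2)}{\sin\theta}$ for $n$ odd (a polynomial in $\cos\theta$). Note $\phi_n(x)=\frac14\Phi_n(2x)$ where $\Phi_n(x)=((n+1)x^2-6x-4n)U_n(x/2)+2(x+2)U_{n-1}(x/2)+2(x+2)$. *)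

theory Defs
  imports Complex_Main "HOL-Computational_Algebra.Polynomial"
begin

fun chebU_nat :: "nat \<Rightarrow> real \<Rightarrow> real" where
  "chebU_nat 0 x = 1"
| "chebU_nat (Suc 0) x = 2 * x"
| "chebU_nat (Suc (Suc n)) x = 2 * x * chebU_nat (Suc n) x - chebU_nat n x"

text \<open>Extension to all integer indices compatible with the recurrence
  U_{k+1} = 2x U_k - U_{k-1}: U_{-1} = 0, U_{-k} = - U_{k-2} for k >= 2.\<close>
definition chebU :: "int \<Rightarrow> real \<Rightarrow> real" where
  "chebU k x = (if k \<ge> 0 then chebU_nat (nat k) x
               else if k = -1 then 0
               else - chebU_nat (nat (-k - 2)) x)"

definition chebUe_poly :: "nat \<Rightarrow> real poly" where
  "chebUe_poly n = (THE p. \<forall>t. if even n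
       then (sin (t/2) \<noteq> 0 \<longrightarrow> poly p (cos t) = sin ((n+1)*t/2) / sin (t/2))
       else (sin t \<noteq> 0 \<longrightarrow> poly p (cos t) = sin ((n+1)*t/2) / sin t))"

definition chebUe :: "nat \<Rightarrow> real \<Rightarrow> real" where
  "chebUe n x = poly (chebUe_poly n) x"

definition phi :: "nat \<Rightarrow> real \<Rightarrow> real" where
  "phi n x = ((real n+1)*x^2 - 3*x - real n) * chebU (int n) x + (x+1) * chebU (int n - 1) x + x + 1"

definition Qpoly :: "nat \<Rightarrow> real \<Rightarrow> real" where
  "Qpoly n (x::real) = (if even n then
      (let k = int (n div 2) in
        ((2*of_int k+1)*x^2 - 3*x - 2*of_int k) * (chebU k x - chebU (k-1) x)
        + (x+1) * (chebU (k-1) x - chebU (k-2) x))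
    else
      (let k = int (n div 2) in
        ((2*of_int k+2)*x^2 - 3*x - 2*of_int k - 1) * (chebU (k+1) x - chebU (k-1) x)
        + (x+1) * (chebU k x - chebU (k-2) x)))"

end

theory Submission
  imports Defs
begin


lemma U_rec: "chebU (k+1) x = 2*x*chebU k x - chebU (k-1) x"
proof -
  consider "k \<ge> 1" | "k = 0" | "k = -1" | "k = -2" | "k \<le> -3" by linarith
  then show ?thesis
  proof cases
    case 1
    define m where "m = nat (k-1)"
    have a: "nat (k+1) = Suc (Suc m)" "nat k = Suc m" "nat (k-1) = m" using 1 by (auto simp: m_def)
    show ?thesis using 1 by (simp add: chebU_def a)
  next
    case 5
    define m where "m = nat (-k-3)"
    have m: "k = - int m - 3" using 5 by (simp add: m_def)
    have a: "nat (- k - 2) = Suc m" "nat (-(k+1) - 2) = m" "nat (-(k-1) - 2) = Suc (Suc m)" "nat (- 3 - k) = m" "nat (- 1 - k) = Suc (Suc m)" using m by auto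
    show ?thesis using 5 by (simp add: chebU_def a)
  qed (auto simp: chebU_def)
qed

lemma U_cassini: "chebU (k-1) x ^2 - chebU k x * chebU (k-2) x = 1"
proof (induction k rule: int_induct[where k=0])
  case base
  then show ?case by (simp add: chebU_def)
next
  case (step1 i)
  have r1: "chebU (i+1) x = 2*x*chebU i x - chebU (i-1) x" by (rule U_rec)
  have r2: "chebU i x = 2*x*chebU (i-1) x - chebU (i-2) x" using U_rec[of "i-1" x] by simp
  have e: "i+1-1 = i" "i+1-2 = i-1" by simp_all
  have alg: "\<And>A B C D::real. C = 2*x*B - A \<Longrightarrow> D = 2*x*C - B \<Longrightarrow> B^2 - C*A = 1 \<Longrightarrow> C^2 - D*B = 1"
    by algebra
  show ?case unfolding e by (rule alg[OF r2 r1 step1(2)])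
next
  case (step2 i)
  have r1: "chebU i x = 2*x*chebU (i-1) x - chebU (i-2) x" using U_rec[of "i-1" x] by simp
  have r2: "chebU (i-1) x = 2*x*chebU (i-2) x - chebU (i-3) x" using U_rec[of "i-2" x] by simp
  have e: "i - 1 - 1 = i - 2" "i - 1 - 2 = i - 3" by simp_all
  have alg: "\<And>A B C D::real. C = 2*x*B - A \<Longrightarrow> D = 2*x*C - B \<Longrightarrow> C^2 - D*B = 1 \<Longrightarrow> B^2 - C*A = 1"
    by algebra
  show ?case unfolding e by (rule alg[OF r2 r1 step2(2)])
qed

lemma U_add: "chebU (m+n) x = chebU m x * chebU n x - chebU (m-1) x * chebU (n-1) x
   \<and> chebU (m+(n+1)) x = chebU m x * chebU (n+1) x - chebU (m-1) x * chebU n x"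
proof (induction n rule: int_induct[where k=0])
  case base
  then show ?case using U_rec[of m x] by (simp add: chebU_def)
next
  case (step1 i)
  have e1: "chebU (m+(i+1+1)) x = 2*x*chebU (m+(i+1)) x - chebU (m+i) x" using U_rec[of "m+(i+1)" x] by (simp add: algebra_simps)
  have e2: "chebU (i+1+1) x = 2*x*chebU (i+1) x - chebU i x" using U_rec[of "i+1" x] by simp
  have e3: "chebU (i+1) x = 2*x*chebU i x - chebU (i-1) x" by (rule U_rec)
  have e: "i + 1 - 1 = i" by simp_all
  have alg: "\<And>A B C D E F G H J::real. A = H*C - G*B \<Longrightarrow> D = H*E - G*C \<Longrightarrow> F = 2*x*D - A \<Longrightarrow> J = 2*x*E - C \<Longrightarrow>
     E = 2*x*C - B \<Longrightarrow> D = H*E - G*C \<and> F = H*J - G*E" by (intro conjI; algebra)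
  show ?case unfolding e using alg[OF step1(2)[THEN conjunct1] step1(2)[THEN conjunct2] e1 e2 e3] .
next
  case (step2 i)
  have e1: "chebU (m+(i-1)) x = 2*x*chebU (m+i) x - chebU (m+(i+1)) x" using U_rec[of "m+i" x] by (simp add: algebra_simps)
  have e2: "chebU (i-1) x = 2*x*chebU i x - chebU (i+1) x" using U_rec[of "i" x] by simp
  have e3: "chebU (i-1-1) x = 2*x*chebU (i-1) x - chebU i x" using U_rec[of "i-1" x] by simp
  have e: "i - 1 + 1 = i" by simp
  have alg: "\<And>A B C D E F G H J K::real. A = H*C - G*B \<Longrightarrow> D = H*E - G*C \<Longrightarrow> F = 2*x*A - D \<Longrightarrow> B = 2*x*C - E
     \<Longrightarrow> K = 2*x*B - C \<Longrightarrow> F = H*B - G*K \<and> A = H*C - G*B" by (intro conjI; algebra)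
  show ?case unfolding e using alg[OF step2(2)[THEN conjunct1] step2(2)[THEN conjunct2] e1 e2 e3] .
qed



fun Upoly :: "nat \<Rightarrow> real poly" where
  "Upoly 0 = 1"
| "Upoly (Suc 0) = [:0, 2:]"
| "Upoly (Suc (Suc n)) = [:0, 2:] * Upoly (Suc n) - Upoly n"

lemma poly_Upoly: "poly (Upoly n) x = chebU_nat n x"
  by (induction n rule: Upoly.induct) auto

lemma sin_step: "sin (y + t::real) = 2 * cos t * sin y - sin (y - t)"
  by (simp add: sin_add sin_diff)

lemma sin_U: "sin ((real k + 1) * t) = sin t * chebU_nat k (cos t)"
proof (induction k rule: Upoly.induct)
  case 1 then show ?case by simp
next
  case 2 then show ?case by (simp add: sin_double)
next
  case (3 n)
  have "sin ((real (Suc (Suc n)) + 1) * t) = sin ((real (Suc n) + 1) * t + t)"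
    by (simp add: algebra_simps)
  also have "\<dots> = 2 * cos t * sin ((real (Suc n) + 1) * t) - sin ((real n + 1) * t)"
    by (subst sin_step) (simp add: algebra_simps)
  finally show ?case using 3 by (simp add: algebra_simps)
qed

lemma chebU_int_nat: "chebU (int k) x = chebU_nat k x"
  by (simp add: chebU_def)

lemma sin_W: "sin ((2 * real k + 1) * s) = sin s * (chebU (int k) (cos (2*s)) + chebU (int k - 1) (cos (2*s)))
  \<and> sin ((2 * real (Suc k) + 1) * s) = sin s * (chebU (int (Suc k)) (cos (2*s)) + chebU (int (Suc k) - 1) (cos (2*s)))"
proof (induction k)
  case 0
  have e3: "3 * s = 2 * s + s" by simp
  have "sin (3 * s) = sin (2*s) * cos s + cos (2*s) * sin s" unfolding e3 by (rule sin_add)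
  also have "\<dots> = sin s * (2 * cos (2*s) + 1)" unfolding sin_double cos_double_cos
    by (simp add: algebra_simps power2_eq_square)
  finally have "sin (3 * s) = sin s * (2 * cos (2*s) + 1)" .
  then show ?case by (simp add: chebU_def)
next
  case (Suc k)
  let ?c = "cos (2*s)"
  have r1: "chebU (int (Suc (Suc k))) ?c = 2 * ?c * chebU (int (Suc k)) ?c - chebU (int k) ?c"
    using U_rec[of "int (Suc k)" ?c] by simp
  have r2: "chebU (int (Suc (Suc k)) - 1) ?c = 2 * ?c * chebU (int (Suc k) - 1) ?c - chebU (int k - 1) ?c"
    using U_rec[of "int k" ?c] by (simp add: add.commute)
  have "sin ((2 * real (Suc (Suc k)) + 1) * s) = sin ((2 * real (Suc k) + 1) * s + 2*s)"
    by (simp add: algebra_simps)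
  also have "\<dots> = 2 * ?c * sin ((2 * real (Suc k) + 1) * s) - sin ((2 * real k + 1) * s)"
    by (subst sin_step) (simp add: algebra_simps)
  finally have "sin ((2 * real (Suc (Suc k)) + 1) * s) = sin s * (chebU (int (Suc (Suc k))) ?c + chebU (int (Suc (Suc k)) - 1) ?c)"
    using Suc unfolding r1 r2 by (simp add: algebra_simps)
  then show ?case using Suc by simp
qed

lemma poly_uniq:
  fixes p q :: "real poly"
  assumes "\<And>y. -1 < y \<Longrightarrow> y < 1 \<Longrightarrow> poly p y = poly q y"
  shows "p = q"
proof (rule ccontr)
  assume "p \<noteq> q"
  then have "p - q \<noteq> 0" by simp
  then have "finite {y. poly (p - q) y = 0}" by (rule poly_roots_finite)
  moreover have "{-1<..<(1::real)} \<subseteq> {y. poly (p - q) y = 0}" using assms by auto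
  ultimately have "finite {-1<..<(1::real)}" by (rule finite_subset[rotated])
  then show False using infinite_Ioo[of "-1::real" 1] by simp
qed

lemma Ue_odd: "chebUe (2*k+1) x = chebU_nat k x"
proof -
  let ?P = "\<lambda>p. \<forall>t. if even (2*k+1)
       then (sin (t/2) \<noteq> 0 \<longrightarrow> poly p (cos t) = sin ((real (2*k+1)+1)*t/2) / sin (t/2))
       else (sin t \<noteq> 0 \<longrightarrow> poly p (cos t) = sin ((real (2*k+1)+1)*t/2) / sin t)"
  have arg: "(real (2*k+1)+1)*t/2 = (real k + 1) * t" for t by (simp add: algebra_simps)
  have P1: "?P (Upoly k)"
  proof
    fix t :: real
    have "sin t \<noteq> 0 \<longrightarrow> poly (Upoly k) (cos t) = sin ((real (2*k+1)+1)*t/2) / sin t"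
      unfolding arg sin_U poly_Upoly by simp
    then show "if even (2*k+1)
       then (sin (t/2) \<noteq> 0 \<longrightarrow> poly (Upoly k) (cos t) = sin ((real (2*k+1)+1)*t/2) / sin (t/2))
       else (sin t \<noteq> 0 \<longrightarrow> poly (Upoly k) (cos t) = sin ((real (2*k+1)+1)*t/2) / sin t)" by simp
  qed
  have P2: "q = Upoly k" if "?P q" for q
  proof (rule poly_uniq)
    fix y :: real assume y: "-1 < y" "y < 1"
    let ?t = "arccos y"
    have "sin ?t \<noteq> 0" using sin_arccos_nonzero y by blast
    moreover have "cos ?t = y" using y by simp
    ultimately show "poly q y = poly (Upoly k) y"
      using spec[OF that, of ?t] P1[rule_format, of ?t] by simp
  qed
  have "chebUe_poly (2*k+1) = Upoly k"
    unfolding chebUe_poly_def by (rule the_equality[of ?P, OF P1 P2]) 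
  then show ?thesis by (simp add: chebUe_def poly_Upoly)
qed



definition Wpoly :: "nat \<Rightarrow> real poly" where
  "Wpoly k = Upoly k + (if k = 0 then 0 else Upoly (k - 1))"

lemma poly_Wpoly: "poly (Wpoly k) x = chebU (int k) x + chebU (int k - 1) x"
proof (cases k)
  case 0 then show ?thesis by (simp add: Wpoly_def chebU_def)
next
  case (Suc m)
  have "chebU (int k - 1) x = chebU_nat m x" using Suc by (simp add: chebU_def)
  then show ?thesis using Suc by (simp add: Wpoly_def poly_Upoly chebU_int_nat del: of_nat_Suc)
qed

lemma Ue_even: "chebUe (2*k) x = chebU (int k) x + chebU (int k - 1) x"
proof -
  let ?P = "\<lambda>p. \<forall>t. if even (2*k)
       then (sin (t/2) \<noteq> 0 \<longrightarrow> poly p (cos t) = sin ((real (2*k)+1)*t/2) / sin (t/2))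
       else (sin t \<noteq> 0 \<longrightarrow> poly p (cos t) = sin ((real (2*k)+1)*t/2) / sin t)"
  have arg: "(real (2*k)+1)*t/2 = (2 * real k + 1) * (t/2)" for t by (simp add: algebra_simps)
  have P1: "?P (Wpoly k)"
  proof
    fix t :: real
    have c: "cos t = cos (2 * (t/2))" by simp
    have "sin (t/2) \<noteq> 0 \<longrightarrow> poly (Wpoly k) (cos t) = sin ((real (2*k)+1)*t/2) / sin (t/2)"
      unfolding arg sin_W[THEN conjunct1] poly_Wpoly c by simp
    then show "if even (2*k)
       then (sin (t/2) \<noteq> 0 \<longrightarrow> poly (Wpoly k) (cos t) = sin ((real (2*k)+1)*t/2) / sin (t/2))
       else (sin t \<noteq> 0 \<longrightarrow> poly (Wpoly k) (cos t) = sin ((real (2*k)+1)*t/2) / sin t)" by simp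
  qed
  have P2: "q = Wpoly k" if "?P q" for q
  proof (rule poly_uniq)
    fix y :: real assume y: "-1 < y" "y < 1"
    let ?t = "arccos y"
    have "0 < ?t" "?t < pi" using arccos_lt_bounded[OF y] by auto
    then have "sin (?t/2) \<noteq> 0" by (intro sin_gt_zero[THEN less_imp_neq, symmetric]) auto
    moreover have "cos ?t = y" using y by simp
    ultimately show "poly q y = poly (Wpoly k) y"
      using spec[OF that, of ?t] P1[rule_format, of ?t] by simp
  qed
  have "chebUe_poly (2*k) = Wpoly k"
    unfolding chebUe_poly_def by (rule the_equality[of ?P, OF P1 P2])
  then show ?thesis by (simp add: chebUe_def poly_Wpoly)
qed

theorem theoremB4:
  fixes n :: nat and x :: real
  assumes "n \<ge> 1"
  shows "phi n x = chebUe n x * Qpoly n x"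
proof (cases "even n")
  case True
  then obtain k where n: "n = 2*k" by blast
  have dk: "int (n div 2) = int k" using n by simp
  have i1: "int n = int k + int k" using n by simp
  have i2: "int n - 1 = (int k - 1) + int k" using n by simp
  have a1: "chebU (int n) x = chebU (int k) x * chebU (int k) x - chebU (int k - 1) x * chebU (int k - 1) x"
    unfolding i1 by (rule U_add[THEN conjunct1])
  have a2: "chebU (int n - 1) x = chebU (int k - 1) x * chebU (int k) x - chebU (int k - 1 - 1) x * chebU (int k - 1) x"
    unfolding i2 by (rule U_add[THEN conjunct1])
  have e: "int k - 1 - 1 = int k - 2" by simp
  have cas: "chebU (int k - 1) x ^2 - chebU (int k) x * chebU (int k - 2) x = 1" by (rule U_cassini)
  have ue: "chebUe n x = chebU (int k) x + chebU (int k - 1) x" using Ue_even n by simp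
  have rn: "real n = 2 * real k" using n by simp
  show ?thesis
    unfolding phi_def Qpoly_def ue a1 a2 e using True dk rn cas
    by (simp add: Let_def power2_eq_square algebra_simps)
next
  case False
  then obtain k where n: "n = 2*k+1" using oddE by blast
  have dk: "int (n div 2) = int k" using n by simp
  have i1: "int n = int k + (int k + 1)" using n by simp
  have i2: "int n - 1 = int k + int k" using n by simp
  have a1: "chebU (int n) x = chebU (int k) x * chebU (int k + 1) x - chebU (int k - 1) x * chebU (int k) x"
    unfolding i1 by (rule U_add[THEN conjunct2])
  have a2: "chebU (int n - 1) x = chebU (int k) x * chebU (int k) x - chebU (int k - 1) x * chebU (int k - 1) x"
    unfolding i2 by (rule U_add[THEN conjunct1])
  have cas: "chebU (int k - 1) x ^2 - chebU (int k) x * chebU (int k - 2) x = 1" by (rule U_cassini)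
  have ue: "chebUe n x = chebU (int k) x" using Ue_odd n by (simp add: chebU_int_nat)
  have rn: "real n = 2 * real k + 1" using n by simp
  show ?thesis
    unfolding phi_def Qpoly_def ue a1 a2 using False dk rn cas
    by (simp add: Let_def power2_eq_square algebra_simps)
qed

end
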